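(* (i) Let $V\in\mathrm{Rep}_{\mathrm{ffd}}(Y_\hbar(\mathfrak g))$ and let $\mu$ be a weight of $V$. Then, for either choice of sign, the poles of $\xi_i(u)_\mu$ are contained in the union of the poles of $x_i^\pm(u)_\mu$ and those of $x_i^\pm(u)_{\mu\mp\alpha_i}$. (ii) Let $\mathcal V\in\mathrm{Rep}_{\mathrm{ffd}}(U_q(L\mathfrak g))$ and let $\mu$ be a weight of $\mathcal V$. Then, for either choice of sign, the poles of $\Psi_i(z)_\mu$ are contained in the union of the poles of $\mathcal X_i^\pm(z)_\mu$ and those of $\mathcal X_i^\pm(z)_{\mu\mp\alpha_i}$.
   Context: $\mathfrak g$ is the Kac–Moody algebra of a symmetrisable generalized Cartan matrix $(a_{ij})_{i,j\in I}$ (symmetrisers $d_i$, realization $(\mathfrak h,\{\alpha_i\},\{\alpha_i^\vee\})$); $\hbar\ne0$; $q$ not a root of unity, $q_i=q^{d_i}$. $Y_\hbar(\mathfrak g)$ and $U_q(L\mathfrak g)$ are the Yangian (generators $h,\xi_{i,r},x^\pm_{i,r}$; in particular $[x^+_{i,r},x^-_{j,s}]=\delta_{ij}\xi_{i,r+s}$) and quantum loop algebra (generators $K_h,\Psi^\pm_{i,\pm r},\mathcal X^\pm_{i,k}$; in particular $[\mathcal X^+_{i,k},\mathcal X^-_{j,l}]=\delta_{ij}\frac{\Psi^+_{i,k+l}-\Psi^-_{i,k+l}}{q_i-q_i^{-1}}$) in Drinfeld's loop presentation. $\mathrm{Rep}_{\mathrm{ffd}}$: modules with finite-dimensional weight spaces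 ($h$ acts by $\mu(h)$, resp. $K_h$ by $q^{\mu(h)}$), weights bounded above by finitely many weights, and for each weight $\mu$ and $i$, $\mu-n\alpha_i$ not a weight for $n\gg0$. For a weight $\mu$, $\xi_i(u)_\mu$ and $x_i^\pm(u)_\mu:V_\mu\to V_{\mu\pm\alpha_i}$ denote the rational functions whose expansions at $u=\infty$ are the actions of $\xi_i(u)=1+\hbar\sum\xi_{i,r}u^{-r-1}$ and $x_i^\pm(u)=\hbar\sum x^\pm_{i,r}u^{-r-1}$ on $V_\mu$; $\Psi_i(z)_\mu$, $\mathcal X_i^\pm(z)_\mu:\mathcal V_\mu\to\mathcal V_{\mu\pm\alpha_i}$ denote the rational functions whose expansions at $z=\infty$ and $z=0$ are $\sum_{r\ge0}\Psi^+_{i,r}z^{-r}$, $\sum_{r\ge0}\Psi^-_{i,-r}z^r$, resp. $\sum_{k\ge0}\mathcal X^\pm_{i,k}z^{-k}$, $-\sum_{k<0}\mathcal X^\pm_{i,k}z^{-k}$. *)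

theory Defs
  imports "HOL-Analysis.Analysis" "HOL-Complex_Analysis.Complex_Analysis"
          "HOL-Computational_Algebra.Polynomial"
begin

text \<open>The index set I is a finite type 'i; the Cartan subalgebra h is complex^'h,
  and its dual is identified with complex^'h via the bilinear pairing below.\<close>

definition pair :: "complex^'h \<Rightarrow> complex^'h \<Rightarrow> complex" where
  "pair mu h = (\<Sum>k\<in>UNIV. mu $ k * h $ k)"

definition gcm :: "('i::finite \<Rightarrow> 'i \<Rightarrow> int) \<Rightarrow> bool" where
  "gcm A \<longleftrightarrow> (\<forall>i. A i i = 2) \<and> (\<forall>i j. i \<noteq> j \<longrightarrow> A i j \<le> 0)
            \<and> (\<forall>i j. A i j = 0 \<longleftrightarrow> A j i = 0)"

definition symmetrisers :: "('i::finite \<Rightarrow> 'i \<Rightarrow> int) \<Rightarrow> ('i \<Rightarrow> nat) \<Rightarrow> bool" where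
  "symmetrisers A d \<longleftrightarrow> (\<forall>i. d i > 0) \<and> (\<forall>i j. int (d i) * A i j = int (d j) * A j i)"

definition cindep :: "('i::finite \<Rightarrow> complex^'h) \<Rightarrow> bool" where
  "cindep v \<longleftrightarrow> (\<forall>c. (\<Sum>i\<in>UNIV. c i *s v i) = 0 \<longrightarrow> (\<forall>i. c i = 0))"

definition realization ::
  "('i::finite \<Rightarrow> 'i \<Rightarrow> int) \<Rightarrow> ('i \<Rightarrow> complex^'h::finite) \<Rightarrow> ('i \<Rightarrow> complex^'h) \<Rightarrow> bool" where
  "realization A alpha coroot \<longleftrightarrow>
     cindep alpha \<and> cindep coroot \<and>
     (\<forall>i j. pair (alpha j) (coroot i) = of_int (A i j)) \<and>
     CARD('h) = 2 * CARD('i) - rank (\<chi> i j. (of_int (A i j) :: complex))"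

text \<open>A module with finite-dimensional weight spaces V = (+)_mu V_mu is encoded by
  dm mu = dim V_mu (so mu is a weight iff dm mu > 0), V_mu = complex^(dm mu), and each
  generator by a family of matrices (functions nat => nat => complex, vanishing outside
  their dimensions) between weight spaces.\<close>

type_synonym cmat = "nat \<Rightarrow> nat \<Rightarrow> complex"

definition supp_mat :: "nat \<Rightarrow> nat \<Rightarrow> cmat \<Rightarrow> bool" where
  "supp_mat r c M \<longleftrightarrow> (\<forall>a b. (r \<le> a \<or> c \<le> b) \<longrightarrow> M a b = 0)"

definition mmul :: "nat \<Rightarrow> cmat \<Rightarrow> cmat \<Rightarrow> cmat" where
  "mmul k M N = (\<lambda>a c. \<Sum>b<k. M a b * N b c)"

definition idm :: "nat \<Rightarrow> cmat" where
  "idm n = (\<lambda>a b. if a = b \<and> a < n then 1 else 0)"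

definition msc :: "complex \<Rightarrow> cmat \<Rightarrow> cmat" where
  "msc c M = (\<lambda>a b. c * M a b)"

text \<open>Action of a word g_1 g_2 ... g_m (g_m applied first) on V_mu:
  returns the target weight and the matrix.\<close>
fun wprod :: "('w::plus \<Rightarrow> nat) \<Rightarrow> ('g \<Rightarrow> 'w) \<Rightarrow> ('g \<Rightarrow> 'w \<Rightarrow> cmat) \<Rightarrow> 'g list \<Rightarrow> 'w \<Rightarrow> 'w \<times> cmat"
  where
  "wprod dm sh op [] mu = (mu, idm (dm mu))"
| "wprod dm sh op (g # w) mu =
     (let (nu, M) = wprod dm sh op w mu in (nu + sh g, mmul (dm nu) (op g nu) M))"

definition act :: "('w::plus \<Rightarrow> nat) \<Rightarrow> ('g \<Rightarrow> 'w) \<Rightarrow> ('g \<Rightarrow> 'w \<Rightarrow> cmat)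
                   \<Rightarrow> (complex \<times> 'g list) list \<Rightarrow> 'w \<Rightarrow> cmat" where
  "act dm sh op L mu = (\<lambda>a b. \<Sum>(c, w)\<leftarrow>L. c * snd (wprod dm sh op w mu) a b)"

text \<open>Nested commutator [g_1,[g_2,...,[g_m,b]...]] as a linear combination of words.\<close>
fun adlc :: "'g \<Rightarrow> (complex \<times> 'g list) list \<Rightarrow> (complex \<times> 'g list) list" where
  "adlc g L = map (\<lambda>(c, w). (c, g # w)) L @ map (\<lambda>(c, w). (- c, w @ [g])) L"

definition nested_comm :: "'g list \<Rightarrow> 'g \<Rightarrow> (complex \<times> 'g list) list" where
  "nested_comm gs b = foldr adlc gs [(1, [b])]"

definition sgn_b :: "bool \<Rightarrow> int" where
  "sgn_b s = (if s then 1 else -1)"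

definition ffd_weights :: "('i::finite \<Rightarrow> complex^'h) \<Rightarrow> (complex^'h \<Rightarrow> nat) \<Rightarrow> bool" where
  "ffd_weights alpha dm \<longleftrightarrow>
     (\<exists>Lam. finite Lam \<and>
        (\<forall>mu. 0 < dm mu \<longrightarrow> (\<exists>lam\<in>Lam. \<exists>k::'i \<Rightarrow> nat. lam = mu + (\<Sum>i\<in>UNIV. of_nat (k i) *s alpha i))))
   \<and> (\<forall>mu i. \<exists>n0. \<forall>n\<ge>n0. dm (mu - of_nat n *s alpha i) = 0)"

datatype 'i ygen = YXi 'i nat | YX bool 'i nat  \<comment> \<open>xi_{i,r};  x^+_{i,r} (True) / x^-_{i,r} (False)\<close>

fun ysh :: "('i \<Rightarrow> complex^'h) \<Rightarrow> 'i ygen \<Rightarrow> complex^'h" where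
  "ysh alpha (YXi i r) = 0"
| "ysh alpha (YX s i r) = of_int (sgn_b s) *s alpha i"

fun yop :: "('i \<Rightarrow> nat \<Rightarrow> complex^'h \<Rightarrow> cmat) \<Rightarrow> (bool \<Rightarrow> 'i \<Rightarrow> nat \<Rightarrow> complex^'h \<Rightarrow> cmat)
            \<Rightarrow> 'i ygen \<Rightarrow> complex^'h \<Rightarrow> cmat" where
  "yop xi x (YXi i r) = xi i r"
| "yop xi x (YX s i r) = x s i r"

text \<open>Drinfeld's loop presentation of Y_hbar(g), relations (Y1)-(Y7), imposed weight space
  by weight space; the relations involving h hold automatically in the graded encoding,
  and xi_{i,0} = d_i alpha_i^vee acts on V_mu by d_i mu(alpha_i^vee).\<close>
definition yangian_rep ::
  "('i::finite \<Rightarrow> 'i \<Rightarrow> int) \<Rightarrow> ('i \<Rightarrow> nat) \<Rightarrow> ('i \<Rightarrow> complex^'h::finite) \<Rightarrow> ('i \<Rightarrow> complex^'h)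
   \<Rightarrow> complex \<Rightarrow> (complex^'h \<Rightarrow> nat)
   \<Rightarrow> ('i \<Rightarrow> nat \<Rightarrow> complex^'h \<Rightarrow> cmat) \<Rightarrow> (bool \<Rightarrow> 'i \<Rightarrow> nat \<Rightarrow> complex^'h \<Rightarrow> cmat) \<Rightarrow> bool" where
  "yangian_rep A d alpha coroot hb dm xi x \<longleftrightarrow>
   (let ac = act dm (ysh alpha) (yop xi x) in
     (\<forall>i r mu. supp_mat (dm mu) (dm mu) (xi i r mu))
   \<and> (\<forall>s i r mu. supp_mat (dm (mu + of_int (sgn_b s) *s alpha i)) (dm mu) (x s i r mu))
   \<comment> \<open>xi_{i,0} = d_i alpha_i^vee\<close>
   \<and> (\<forall>i mu. xi i 0 mu = msc (of_nat (d i) * pair mu (coroot i)) (idm (dm mu)))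
   \<comment> \<open>(Y1) [xi_{i,r}, xi_{j,s}] = 0\<close>
   \<and> (\<forall>i j r t mu. ac [(1, [YXi i r, YXi j t]), (-1, [YXi j t, YXi i r])] mu = (\<lambda>a b. 0))
   \<comment> \<open>[xi_{i,0}, x^+-_{j,t}] = +- d_i a_ij x^+-_{j,t}\<close>
   \<and> (\<forall>s i j t mu. ac [(1, [YXi i 0, YX s j t]), (-1, [YX s j t, YXi i 0])] mu
          = ac [(of_int (sgn_b s * int (d i) * A i j), [YX s j t])] mu)
   \<comment> \<open>(Y4)\<close>
   \<and> (\<forall>s i j r t mu. ac [(1, [YXi i (Suc r), YX s j t]), (-1, [YX s j t, YXi i (Suc r)]),
                          (-1, [YXi i r, YX s j (Suc t)]), (1, [YX s j (Suc t), YXi i r])] mu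
          = ac [(of_int (sgn_b s * int (d i) * A i j) * hb / 2, [YXi i r, YX s j t]),
                (of_int (sgn_b s * int (d i) * A i j) * hb / 2, [YX s j t, YXi i r])] mu)
   \<comment> \<open>(Y5)\<close>
   \<and> (\<forall>s i j r t mu. ac [(1, [YX s i (Suc r), YX s j t]), (-1, [YX s j t, YX s i (Suc r)]),
                          (-1, [YX s i r, YX s j (Suc t)]), (1, [YX s j (Suc t), YX s i r])] mu
          = ac [(of_int (sgn_b s * int (d i) * A i j) * hb / 2, [YX s i r, YX s j t]),
                (of_int (sgn_b s * int (d i) * A i j) * hb / 2, [YX s j t, YX s i r])] mu)
   \<comment> \<open>(Y6) [x^+_{i,r}, x^-_{j,t}] = delta_ij xi_{i,r+t}\<close>
   \<and> (\<forall>i j r t mu. ac [(1, [YX True i r, YX False j t]), (-1, [YX False j t, YX True i r])] mu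
          = (if i = j then ac [(1, [YXi i (r + t)])] mu else (\<lambda>a b. 0)))
   \<comment> \<open>(Y7) Serre relations, m = 1 - a_ij\<close>
   \<and> (\<forall>s i j rs t mu. i \<noteq> j \<longrightarrow>
          (\<lambda>a b. \<Sum>\<pi>\<in>{\<pi>. \<pi> permutes {..<nat (1 - A i j)}}.
              ac (nested_comm (map (\<lambda>k. YX s i (rs (\<pi> k))) [0..<nat (1 - A i j)]) (YX s j t)) mu a b)
          = (\<lambda>a b. 0)))"

datatype 'i qgen = QPsi bool 'i int | QX bool 'i int
  \<comment> \<open>Psi^+_{i,k} (True) / Psi^-_{i,k} (False);  X^+_{i,k} (True) / X^-_{i,k} (False)\<close>

fun qsh :: "('i \<Rightarrow> complex^'h) \<Rightarrow> 'i qgen \<Rightarrow> complex^'h" where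
  "qsh alpha (QPsi e i k) = 0"
| "qsh alpha (QX s i k) = of_int (sgn_b s) *s alpha i"

fun qop :: "(bool \<Rightarrow> 'i \<Rightarrow> int \<Rightarrow> complex^'h \<Rightarrow> cmat) \<Rightarrow> (bool \<Rightarrow> 'i \<Rightarrow> int \<Rightarrow> complex^'h \<Rightarrow> cmat)
            \<Rightarrow> 'i qgen \<Rightarrow> complex^'h \<Rightarrow> cmat" where
  "qop Psi X (QPsi e i k) = Psi e i k"
| "qop Psi X (QX s i k) = X s i k"

text \<open>Complex powers of q are taken with respect to a fixed logarithm lq of q:
  q^x = exp (lq * x).\<close>
definition qpow :: "complex \<Rightarrow> complex \<Rightarrow> complex" where
  "qpow lq x = exp (lq * x)"

definition qint :: "complex \<Rightarrow> nat \<Rightarrow> complex" where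
  "qint v n = (v ^ n - inverse v ^ n) / (v - inverse v)"

definition qfact :: "complex \<Rightarrow> nat \<Rightarrow> complex" where
  "qfact v n = (\<Prod>k\<in>{1..n}. qint v k)"

definition qbinom :: "complex \<Rightarrow> nat \<Rightarrow> nat \<Rightarrow> complex" where
  "qbinom v m s = qfact v m / (qfact v s * qfact v (m - s))"

text \<open>Drinfeld's loop presentation of U_q(Lg), relations (QL1)-(QL7), weight space by
  weight space; K_h acts on V_mu by q^{mu(h)}, and Psi^+-_{i,0} = K_{+-d_i alpha_i^vee},
  Psi^+_{i,k} = 0 for k < 0, Psi^-_{i,k} = 0 for k > 0.\<close>
definition qloop_rep ::
  "('i::finite \<Rightarrow> 'i \<Rightarrow> int) \<Rightarrow> ('i \<Rightarrow> nat) \<Rightarrow> ('i \<Rightarrow> complex^'h::finite) \<Rightarrow> ('i \<Rightarrow> complex^'h)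
   \<Rightarrow> complex \<Rightarrow> (complex^'h \<Rightarrow> nat)
   \<Rightarrow> (bool \<Rightarrow> 'i \<Rightarrow> int \<Rightarrow> complex^'h \<Rightarrow> cmat) \<Rightarrow> (bool \<Rightarrow> 'i \<Rightarrow> int \<Rightarrow> complex^'h \<Rightarrow> cmat) \<Rightarrow> bool" where
  "qloop_rep A d alpha coroot lq dm Psi X \<longleftrightarrow>
   (let ac = act dm (qsh alpha) (qop Psi X); qi = (\<lambda>i. qpow lq (of_nat (d i))) in
     (\<forall>e i k mu. supp_mat (dm mu) (dm mu) (Psi e i k mu))
   \<and> (\<forall>s i k mu. supp_mat (dm (mu + of_int (sgn_b s) *s alpha i)) (dm mu) (X s i k mu))
   \<and> (\<forall>e i k mu. sgn_b e * k < 0 \<longrightarrow> Psi e i k mu = (\<lambda>a b. 0))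
   \<and> (\<forall>e i mu. Psi e i 0 mu
          = msc (qpow lq (of_int (sgn_b e) * of_nat (d i) * pair mu (coroot i))) (idm (dm mu)))
   \<comment> \<open>(QL2) the Psi's commute\<close>
   \<and> (\<forall>e e' i j k l mu. ac [(1, [QPsi e i k, QPsi e' j l]), (-1, [QPsi e' j l, QPsi e i k])] mu
          = (\<lambda>a b. 0))
   \<comment> \<open>(QL4)\<close>
   \<and> (\<forall>e s i j k l mu.
        ac [(1, [QPsi e i (k + 1), QX s j l]),
            (- (qi i powi (sgn_b s * A i j)), [QPsi e i k, QX s j (l + 1)]),
            (- (qi i powi (sgn_b s * A i j)), [QX s j l, QPsi e i (k + 1)]),
            (1, [QX s j (l + 1), QPsi e i k])] mu = (\<lambda>a b. 0))
   \<comment> \<open>(QL5)\<close>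
   \<and> (\<forall>s i j k l mu.
        ac [(1, [QX s i (k + 1), QX s j l]),
            (- (qi i powi (sgn_b s * A i j)), [QX s j l, QX s i (k + 1)]),
            (- (qi i powi (sgn_b s * A i j)), [QX s i k, QX s j (l + 1)]),
            (1, [QX s j (l + 1), QX s i k])] mu = (\<lambda>a b. 0))
   \<comment> \<open>(QL6)\<close>
   \<and> (\<forall>i j k l mu. ac [(1, [QX True i k, QX False j l]), (-1, [QX False j l, QX True i k])] mu
          = (if i = j then ac [(1 / (qi i - inverse (qi i)), [QPsi True i (k + l)]),
                               (- 1 / (qi i - inverse (qi i)), [QPsi False i (k + l)])] mu
             else (\<lambda>a b. 0)))
   \<comment> \<open>(QL7) q-Serre relations, m = 1 - a_ij\<close>
   \<and> (\<forall>s i j ks l mu. i \<noteq> j \<longrightarrow>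
        (let m = nat (1 - A i j) in
          (\<lambda>a b. \<Sum>\<pi>\<in>{\<pi>. \<pi> permutes {..<m}}. \<Sum>p\<le>m.
              ((-1) ^ p * qbinom (qi i) m p) *
              snd (wprod dm (qsh alpha) (qop Psi X)
                     (map (\<lambda>t. QX s i (ks (\<pi> t))) [0..<p] @ [QX s j l]
                      @ map (\<lambda>t. QX s i (ks (\<pi> t))) [p..<m]) mu) a b)
          = (\<lambda>a b. 0))))"

definition rat_fun :: "(complex \<Rightarrow> complex) \<Rightarrow> bool" where
  "rat_fun f \<longleftrightarrow> (\<exists>p q :: complex poly. q \<noteq> 0 \<and> (\<forall>z. poly q z \<noteq> 0 \<longrightarrow> f z = poly p z / poly q z))"

definition rat_mat :: "nat \<Rightarrow> nat \<Rightarrow> (complex \<Rightarrow> cmat) \<Rightarrow> bool" where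
  "rat_mat r c F \<longleftrightarrow> (\<forall>a<r. \<forall>b<c. rat_fun (\<lambda>z. F z a b))"

definition expands_at_infty :: "nat \<Rightarrow> nat \<Rightarrow> (complex \<Rightarrow> cmat) \<Rightarrow> (nat \<Rightarrow> cmat) \<Rightarrow> bool" where
  "expands_at_infty r c F coef \<longleftrightarrow>
     (\<forall>a<r. \<forall>b<c. eventually (\<lambda>u. (\<lambda>n. coef n a b / u ^ n) sums F u a b) at_infinity)"

definition expands_at_zero :: "nat \<Rightarrow> nat \<Rightarrow> (complex \<Rightarrow> cmat) \<Rightarrow> (nat \<Rightarrow> cmat) \<Rightarrow> bool" where
  "expands_at_zero r c F coef \<longleftrightarrow>
     (\<forall>a<r. \<forall>b<c. eventually (\<lambda>z. (\<lambda>n. coef n a b * z ^ n) sums F z a b) (at 0))"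

definition mpoles :: "nat \<Rightarrow> nat \<Rightarrow> (complex \<Rightarrow> cmat) \<Rightarrow> complex set" where
  "mpoles r c F = {z. \<exists>a<r. \<exists>b<c. is_pole (\<lambda>u. F u a b) z}"

end

theory Submission imports Defs begin

lemma ev_not_finite_at: "finite S \<Longrightarrow> eventually (\<lambda>x. x \<notin> S) (at (z::complex))"
  using islimpt_finite[of S z] islimpt_iff_eventually[of z S] by blast

lemma ev_not_finite_inf: "finite (S::complex set) \<Longrightarrow> eventually (\<lambda>x. x \<notin> S) at_infinity"
proof -
  assume f: "finite S"
  define b where "b = Max (insert 0 (norm ` S)) + 1"
  have "\<forall>x. norm x \<ge> b \<longrightarrow> x \<notin> S"
  proof (intro allI impI notI)
    fix x assume "b \<le> norm x" "x \<in> S"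
    then have "norm x \<le> Max (insert 0 (norm ` S))" using f by (intro Max_ge) auto
    then show False using \<open>b \<le> norm x\<close> b_def by simp
  qed
  then show ?thesis unfolding eventually_at_infinity by blast
qed

lemma rat_fun_not_essential:
  assumes "rat_fun g" shows "not_essential g z"
proof -
  obtain p q where q: "q \<noteq> 0" and g: "\<And>z. poly q z \<noteq> 0 \<Longrightarrow> g z = poly p z / poly q z"
    using assms unfolding rat_fun_def by blast
  have an: "\<And>r::complex poly. (\<lambda>w. poly r w) analytic_on {z}"
    unfolding analytic_on_holomorphic
    by (intro exI[of _ UNIV]) (auto intro!: poly_holomorphic_on holomorphic_on_id)
  have "not_essential (\<lambda>w. poly p w / poly q w) z"
    by (intro not_essential_divide not_essential_analytic isolated_singularity_at_analytic an)
  moreover have "eventually (\<lambda>w. poly p w / poly q w = g w) (at z)"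
  proof -
    have "finite {w. poly q w = 0}" using q poly_roots_finite by blast
    from ev_not_finite_at[OF this] show ?thesis by eventually_elim (simp add: g)
  qed
  ultimately show ?thesis by (rule not_essential_transform)
qed

lemma rat_fun_no_pole_tendsto:
  assumes "rat_fun g" "\<not> is_pole g z" shows "\<exists>l. (g \<longlongrightarrow> l) (at z)"
  using rat_fun_not_essential[OF assms(1), of z] assms(2) unfolding not_essential_def by blast

lemma rat_fun_const: "rat_fun (\<lambda>z. c)"
  unfolding rat_fun_def by (rule exI[of _ "[:c:]"], rule exI[of _ 1]) auto

lemma rat_fun_add: "rat_fun f \<Longrightarrow> rat_fun g \<Longrightarrow> rat_fun (\<lambda>z. f z + g z)"
  unfolding rat_fun_def
proof (elim exE conjE)
  fix p q p' q' :: "complex poly"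
  assume "q \<noteq> 0" "\<forall>z. poly q z \<noteq> 0 \<longrightarrow> f z = poly p z / poly q z"
     "q' \<noteq> 0" "\<forall>z. poly q' z \<noteq> 0 \<longrightarrow> g z = poly p' z / poly q' z"
  then show "\<exists>p q. q \<noteq> 0 \<and> (\<forall>z. poly q z \<noteq> 0 \<longrightarrow> f z + g z = poly p z / poly q z)"
    by (intro exI[of _ "p * q' + p' * q"] exI[of _ "q * q'"]) (auto simp: field_simps)
qed

lemma rat_fun_mult: "rat_fun f \<Longrightarrow> rat_fun g \<Longrightarrow> rat_fun (\<lambda>z. f z * g z)"
  unfolding rat_fun_def
proof (elim exE conjE)
  fix p q p' q' :: "complex poly"
  assume "q \<noteq> 0" "\<forall>z. poly q z \<noteq> 0 \<longrightarrow> f z = poly p z / poly q z"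
     "q' \<noteq> 0" "\<forall>z. poly q' z \<noteq> 0 \<longrightarrow> g z = poly p' z / poly q' z"
  then show "\<exists>p q. q \<noteq> 0 \<and> (\<forall>z. poly q z \<noteq> 0 \<longrightarrow> f z * g z = poly p z / poly q z)"
    by (intro exI[of _ "p * p'"] exI[of _ "q * q'"]) auto
qed

lemma rat_fun_diff: "rat_fun f \<Longrightarrow> rat_fun g \<Longrightarrow> rat_fun (\<lambda>z. f z - g z)"
  using rat_fun_add[of f "\<lambda>z. (-1) * g z"] rat_fun_mult[OF rat_fun_const, of g "-1"] by simp

lemma rat_fun_sum: "(\<And>c. c \<in> S \<Longrightarrow> rat_fun (f c)) \<Longrightarrow> rat_fun (\<lambda>z. \<Sum>c\<in>S. f c z)"
proof (induction S rule: infinite_finite_induct)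
  case (infinite A) then show ?case by (simp add: rat_fun_const)
next
  case empty then show ?case by (simp add: rat_fun_const)
next
  case (insert x F) then show ?case by (simp add: rat_fun_add)
qed

lemma rat_fun_ev_zero:
  assumes "rat_fun f" "eventually (\<lambda>u. f u = 0) at_infinity"
  shows "eventually (\<lambda>u. f u = 0) (at z)"
proof -
  obtain p q where q: "q \<noteq> 0" and g: "\<And>z. poly q z \<noteq> 0 \<Longrightarrow> f z = poly p z / poly q z"
    using assms unfolding rat_fun_def by blast
  have fq: "finite {w. poly q w = 0}" using q poly_roots_finite by blast
  have p: "p = 0"
  proof (rule ccontr)
    assume "p \<noteq> 0"
    then have "finite {w. poly p w = 0}" using poly_roots_finite by blast
    from ev_not_finite_inf[OF this] ev_not_finite_inf[OF fq] assms(2)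
    have "eventually (\<lambda>u. poly p u \<noteq> 0 \<and> poly q u \<noteq> 0 \<and> f u = 0) at_infinity"
      by eventually_elim auto
    then obtain u where "poly p u \<noteq> 0" "poly q u \<noteq> 0" "f u = 0"
      using eventually_happens' trivial_limit_at_infinity by blast
    then show False using g[of u] by simp
  qed
  from ev_not_finite_at[OF fq] show ?thesis by eventually_elim (simp add: g p)
qed


lemma core:
  fixes F G H :: "complex \<Rightarrow> cmat" and fc gc hc :: "nat \<Rightarrow> cmat" and P Q E :: cmat
    and \<kappa> :: complex
  assumes rF: "rat_mat dF dF F" and eF: "expands_at_infty dF dF F fc"
    and rG: "rat_mat dG dF G" and eG: "expands_at_infty dG dF G gc"
    and rH: "rat_mat dF dH H" and eH: "expands_at_infty dF dH H hc"
    and coef: "\<And>n a b. a < dF \<Longrightarrow> b < dF \<Longrightarrow> fc n a b = (if n = 0 then E a b else 0)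
         + \<kappa> * ((\<Sum>c<dH. hc n a c * Q c b) - (\<Sum>c<dG. P a c * gc n c b))"
  shows "mpoles dF dF F \<subseteq> mpoles dG dF G \<union> mpoles dF dH H"
proof
  fix z assume "z \<in> mpoles dF dF F"
  then obtain a b where ab: "a < dF" "b < dF" and pole: "is_pole (\<lambda>u. F u a b) z"
    unfolding mpoles_def by blast
  show "z \<in> mpoles dG dF G \<union> mpoles dF dH H"
  proof (rule ccontr)
    assume nz: "z \<notin> mpoles dG dF G \<union> mpoles dF dH H"
    define K where "K u = E a b + \<kappa> * ((\<Sum>c<dH. H u a c * Q c b) - (\<Sum>c<dG. P a c * G u c b))" for u
    have evH: "eventually (\<lambda>u. \<forall>c\<in>{..<dH}. (\<lambda>n. hc n a c / u ^ n) sums H u a c) at_infinity"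
      by (rule eventually_ball_finite) (use eH ab in \<open>auto simp: expands_at_infty_def\<close>)
    have evG: "eventually (\<lambda>u. \<forall>c\<in>{..<dG}. (\<lambda>n. gc n c b / u ^ n) sums G u c b) at_infinity"
      by (rule eventually_ball_finite) (use eG ab in \<open>auto simp: expands_at_infty_def\<close>)
    have evF: "eventually (\<lambda>u. (\<lambda>n. fc n a b / u ^ n) sums F u a b) at_infinity"
      using eF ab by (auto simp: expands_at_infty_def)
    have "eventually (\<lambda>u. F u a b - K u = 0) at_infinity"
      using evH evG evF
    proof eventually_elim
      case (elim u)
      have s1: "(\<lambda>n. if n = 0 then E a b else 0) sums E a b"
        using sums_single[of 0 "\<lambda>_. E a b"] by simp
      have s2: "(\<lambda>n. \<Sum>c<dH. hc n a c / u ^ n * Q c b) sums (\<Sum>c<dH. H u a c * Q c b)"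
      proof (rule sums_sum)
        fix c assume "c \<in> {..<dH}"
        then have "(\<lambda>n. hc n a c / u ^ n) sums H u a c" using elim by blast
        then show "(\<lambda>n. hc n a c / u ^ n * Q c b) sums (H u a c * Q c b)" by (rule sums_mult2)
      qed
      have s3: "(\<lambda>n. \<Sum>c<dG. P a c * (gc n c b / u ^ n)) sums (\<Sum>c<dG. P a c * G u c b)"
      proof (rule sums_sum)
        fix c assume "c \<in> {..<dG}"
        then have "(\<lambda>n. gc n c b / u ^ n) sums G u c b" using elim by blast
        then show "(\<lambda>n. P a c * (gc n c b / u ^ n)) sums (P a c * G u c b)" by (rule sums_mult)
      qed
      have "(\<lambda>n. (if n = 0 then E a b else 0) + \<kappa> * ((\<Sum>c<dH. hc n a c / u ^ n * Q c b)
              - (\<Sum>c<dG. P a c * (gc n c b / u ^ n)))) sums K u"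
        unfolding K_def by (intro sums_add s1 sums_mult sums_diff s2 s3)
      moreover have "(\<lambda>n. (if n = 0 then E a b else 0) + \<kappa> * ((\<Sum>c<dH. hc n a c / u ^ n * Q c b)
              - (\<Sum>c<dG. P a c * (gc n c b / u ^ n)))) = (\<lambda>n. fc n a b / u ^ n)"
      proof
        fix n
        show "(if n = 0 then E a b else 0) + \<kappa> * ((\<Sum>c<dH. hc n a c / u ^ n * Q c b)
              - (\<Sum>c<dG. P a c * (gc n c b / u ^ n))) = fc n a b / u ^ n"
        proof -
          have h1: "(\<Sum>c<dH. hc n a c / u ^ n * Q c b) = (\<Sum>c<dH. hc n a c * Q c b) / u ^ n"
            by (simp add: sum_divide_distrib)
          have h2: "(\<Sum>c<dG. P a c * (gc n c b / u ^ n)) = (\<Sum>c<dG. P a c * gc n c b) / u ^ n"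
            by (simp add: sum_divide_distrib)
          show ?thesis unfolding coef[OF ab] h1 h2
            by (simp add: add_divide_distrib diff_divide_distrib[symmetric] times_divide_eq_right)
        qed
      qed
      ultimately have "(\<lambda>n. fc n a b / u ^ n) sums K u" by simp
      with elim(3) show ?case using sums_unique2 by simp
    qed
    moreover have rK: "rat_fun K"
      unfolding K_def using rG rH ab
      by (intro rat_fun_add rat_fun_const rat_fun_mult rat_fun_diff rat_fun_sum)
         (auto simp: rat_mat_def)
    ultimately have "eventually (\<lambda>u. F u a b - K u = 0) (at z)"
      using rF ab by (intro rat_fun_ev_zero rat_fun_diff) (auto simp: rat_mat_def)
    then have "eventually (\<lambda>u. F u a b = K u) (at z)" by simp
    with pole have pK: "is_pole K z" using is_pole_transform by blast
    have "\<forall>c\<in>{..<dH}. \<exists>l. ((\<lambda>u. H u a c) \<longlongrightarrow> l) (at z)"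
      using nz rH ab by (auto simp: mpoles_def rat_mat_def intro!: rat_fun_no_pole_tendsto)
    then obtain lH where lH: "\<And>c. c < dH \<Longrightarrow> ((\<lambda>u. H u a c) \<longlongrightarrow> lH c) (at z)"
      by (metis lessThan_iff)
    have "\<forall>c\<in>{..<dG}. \<exists>l. ((\<lambda>u. G u c b) \<longlongrightarrow> l) (at z)"
      using nz rG ab by (auto simp: mpoles_def rat_mat_def intro!: rat_fun_no_pole_tendsto)
    then obtain lG where lG: "\<And>c. c < dG \<Longrightarrow> ((\<lambda>u. G u c b) \<longlongrightarrow> lG c) (at z)"
      by (metis lessThan_iff)
    have "(K \<longlongrightarrow> E a b + \<kappa> * ((\<Sum>c<dH. lH c * Q c b) - (\<Sum>c<dG. P a c * lG c))) (at z)"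
      unfolding K_def[abs_def]
      by (intro tendsto_intros tendsto_sum) (auto intro: lH lG tendsto_intros)
    then show False using pK not_tendsto_and_filterlim_at_infinity[of "at z" K]
      unfolding is_pole_def by auto
  qed
qed

lemma mmul_idm2: "b < n \<Longrightarrow> mmul k M (mmul n N (idm n)) a b = (\<Sum>c<k. M a c * N c b)"
  unfolding mmul_def idm_def by (simp add: if_distrib cong: if_cong)

lemma mmul_idm: "b < n \<Longrightarrow> mmul n M (idm n) a b = M a b"
  unfolding mmul_def idm_def by (simp add: if_distrib cong: if_cong)

lemma y6:
  assumes "yangian_rep A d alpha coroot hb dm xi x" "a < dm mu" "b < dm mu"
  shows "xi i (r + t) mu a b = (\<Sum>c<dm (mu - alpha i). x True i r (mu - alpha i) a c * x False i t mu c b)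
     - (\<Sum>c<dm (mu + alpha i). x False i t (mu + alpha i) a c * x True i r mu c b)"
proof -
  have "act dm (ysh alpha) (yop xi x) [(1, [YX True i r, YX False i t]), (-1, [YX False i t, YX True i r])] mu
      = act dm (ysh alpha) (yop xi x) [(1, [YXi i (r + t)])] mu"
    using assms(1) unfolding yangian_rep_def Let_def by auto
  from fun_cong[OF fun_cong[OF this, of a], of b] assms(2,3) show ?thesis
    by (simp add: act_def mmul_idm2 mmul_idm sgn_b_def)
qed

lemma q6:
  assumes "qloop_rep A d alpha coroot lq dm Psi X" "a < dm mu" "b < dm mu"
  shows "(\<Sum>c<dm (mu - alpha i). X True i k (mu - alpha i) a c * X False i l mu c b)
     - (\<Sum>c<dm (mu + alpha i). X False i l (mu + alpha i) a c * X True i k mu c b)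
   = (Psi True i (k + l) mu a b - Psi False i (k + l) mu a b) / (qpow lq (of_nat (d i)) - inverse (qpow lq (of_nat (d i))))"
proof -
  let ?qi = "qpow lq (of_nat (d i))"
  have "act dm (qsh alpha) (qop Psi X) [(1, [QX True i k, QX False i l]), (-1, [QX False i l, QX True i k])] mu
      = act dm (qsh alpha) (qop Psi X) [(1 / (?qi - inverse ?qi), [QPsi True i (k + l)]),
                               (- 1 / (?qi - inverse ?qi), [QPsi False i (k + l)])] mu"
    using assms(1) unfolding qloop_rep_def Let_def by auto
  from fun_cong[OF fun_cong[OF this, of a], of b] assms(2,3) show ?thesis
    by (simp add: act_def mmul_idm2 mmul_idm sgn_b_def diff_divide_distrib)
qed

lemma qneg: "qloop_rep A d alpha coroot lq dm Psi X \<Longrightarrow> 0 < n \<Longrightarrow> Psi False i (int n) mu = (\<lambda>a b. 0)"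
  unfolding qloop_rep_def Let_def by (auto simp: sgn_b_def)

lemma qi_nz:
  assumes "symmetrisers A d" "\<forall>n::nat. 0 < n \<longrightarrow> exp lq ^ n \<noteq> 1"
  shows "qpow lq (of_nat (d i)) - inverse (qpow lq (of_nat (d i))) \<noteq> 0"
proof
  let ?e = "qpow lq (of_nat (d i))"
  assume h: "?e - inverse ?e = 0"
  have nz: "?e \<noteq> 0" by (simp add: qpow_def)
  from h nz have "?e * ?e = 1" by (simp add: field_simps)
  moreover have "?e = exp lq ^ d i" unfolding qpow_def
    by (metis exp_of_nat_mult mult.commute)
  ultimately have "exp lq ^ (2 * d i) = 1" by (simp add: power_mult mult.commute power2_eq_square power_mult_distrib)
  moreover have "0 < 2 * d i" using assms(1) by (simp add: symmetrisers_def)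
  ultimately show False using assms(2) by blast
qed


theorem lemma3p7:
  fixes A :: "'i::finite \<Rightarrow> 'i \<Rightarrow> int" and d :: "'i \<Rightarrow> nat"
    and alpha coroot :: "'i \<Rightarrow> complex^'h::finite"
    and hb lq :: complex
  assumes "gcm A" and "symmetrisers A d" and "realization A alpha coroot"
    and "hb \<noteq> 0"
    and "\<forall>n::nat. 0 < n \<longrightarrow> exp lq ^ n \<noteq> 1"
  shows
   "(\<forall>dm xi x s i mu F G H.
       yangian_rep A d alpha coroot hb dm xi x \<and> ffd_weights alpha dm \<and> 0 < dm mu \<and>
       rat_mat (dm mu) (dm mu) F \<and>
       expands_at_infty (dm mu) (dm mu) F
         (\<lambda>n. if n = 0 then idm (dm mu) else msc hb (xi i (n - 1) mu)) \<and>
       rat_mat (dm (mu + of_int (sgn_b s) *s alpha i)) (dm mu) G \<and>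
       expands_at_infty (dm (mu + of_int (sgn_b s) *s alpha i)) (dm mu) G
         (\<lambda>n. if n = 0 then (\<lambda>a b. 0) else msc hb (x s i (n - 1) mu)) \<and>
       rat_mat (dm mu) (dm (mu - of_int (sgn_b s) *s alpha i)) H \<and>
       expands_at_infty (dm mu) (dm (mu - of_int (sgn_b s) *s alpha i)) H
         (\<lambda>n. if n = 0 then (\<lambda>a b. 0) else msc hb (x s i (n - 1) (mu - of_int (sgn_b s) *s alpha i)))
     \<longrightarrow> mpoles (dm mu) (dm mu) F
           \<subseteq> mpoles (dm (mu + of_int (sgn_b s) *s alpha i)) (dm mu) G
             \<union> mpoles (dm mu) (dm (mu - of_int (sgn_b s) *s alpha i)) H)
  \<and> (\<forall>dm Psi X s i mu F G H.
       qloop_rep A d alpha coroot lq dm Psi X \<and> ffd_weights alpha dm \<and> 0 < dm mu \<and>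
       rat_mat (dm mu) (dm mu) F \<and>
       expands_at_infty (dm mu) (dm mu) F (\<lambda>n. Psi True i (int n) mu) \<and>
       expands_at_zero (dm mu) (dm mu) F (\<lambda>n. Psi False i (- int n) mu) \<and>
       rat_mat (dm (mu + of_int (sgn_b s) *s alpha i)) (dm mu) G \<and>
       expands_at_infty (dm (mu + of_int (sgn_b s) *s alpha i)) (dm mu) G
         (\<lambda>n. X s i (int n) mu) \<and>
       expands_at_zero (dm (mu + of_int (sgn_b s) *s alpha i)) (dm mu) G
         (\<lambda>n. if n = 0 then (\<lambda>a b. 0) else msc (-1) (X s i (- int n) mu)) \<and>
       rat_mat (dm mu) (dm (mu - of_int (sgn_b s) *s alpha i)) H \<and>
       expands_at_infty (dm mu) (dm (mu - of_int (sgn_b s) *s alpha i)) H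
         (\<lambda>n. X s i (int n) (mu - of_int (sgn_b s) *s alpha i)) \<and>
       expands_at_zero (dm mu) (dm (mu - of_int (sgn_b s) *s alpha i)) H
         (\<lambda>n. if n = 0 then (\<lambda>a b. 0) else msc (-1) (X s i (- int n) (mu - of_int (sgn_b s) *s alpha i)))
     \<longrightarrow> mpoles (dm mu) (dm mu) F
           \<subseteq> mpoles (dm (mu + of_int (sgn_b s) *s alpha i)) (dm mu) G
             \<union> mpoles (dm mu) (dm (mu - of_int (sgn_b s) *s alpha i)) H)"
proof (intro conjI allI impI)
  fix dm xi x s i mu F G H
  assume asm: "yangian_rep A d alpha coroot hb dm xi x \<and> ffd_weights alpha dm \<and> 0 < dm mu \<and>
       rat_mat (dm mu) (dm mu) F \<and>
       expands_at_infty (dm mu) (dm mu) F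
         (\<lambda>n. if n = 0 then idm (dm mu) else msc hb (xi i (n - 1) mu)) \<and>
       rat_mat (dm (mu + of_int (sgn_b s) *s alpha i)) (dm mu) G \<and>
       expands_at_infty (dm (mu + of_int (sgn_b s) *s alpha i)) (dm mu) G
         (\<lambda>n. if n = 0 then (\<lambda>a b. 0) else msc hb (x s i (n - 1) mu)) \<and>
       rat_mat (dm mu) (dm (mu - of_int (sgn_b s) *s alpha i)) H \<and>
       expands_at_infty (dm mu) (dm (mu - of_int (sgn_b s) *s alpha i)) H
         (\<lambda>n. if n = 0 then (\<lambda>a b. 0) else msc hb (x s i (n - 1) (mu - of_int (sgn_b s) *s alpha i)))"
  have yr: "yangian_rep A d alpha coroot hb dm xi x" using asm by blast
  show "mpoles (dm mu) (dm mu) F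
           \<subseteq> mpoles (dm (mu + of_int (sgn_b s) *s alpha i)) (dm mu) G
             \<union> mpoles (dm mu) (dm (mu - of_int (sgn_b s) *s alpha i)) H"
  proof (cases s)
    case True
    have st: "s = True" using True by simp
    have "mpoles (dm mu) (dm mu) F \<subseteq> mpoles (dm (mu + alpha i)) (dm mu) G \<union> mpoles (dm mu) (dm (mu - alpha i)) H"
    proof (rule core[where P = "x False i 0 (mu + alpha i)" and Q = "x False i 0 mu" and \<kappa> = 1
          and E = "idm (dm mu)"])
      show "rat_mat (dm mu) (dm mu) F" using asm by blast
      show "expands_at_infty (dm mu) (dm mu) F
         (\<lambda>n. if n = 0 then idm (dm mu) else msc hb (xi i (n - 1) mu))" using asm by blast
      show "rat_mat (dm (mu + alpha i)) (dm mu) G" using asm unfolding st by (simp add: sgn_b_def cong: if_cong)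
      show "expands_at_infty (dm (mu + alpha i)) (dm mu) G
         (\<lambda>n. if n = 0 then (\<lambda>a b. 0) else msc hb (x True i (n - 1) mu))" using asm unfolding st by (simp add: sgn_b_def cong: if_cong)
      show "rat_mat (dm mu) (dm (mu - alpha i)) H" using asm unfolding st by (simp add: sgn_b_def cong: if_cong)
      show "expands_at_infty (dm mu) (dm (mu - alpha i)) H
         (\<lambda>n. if n = 0 then (\<lambda>a b. 0) else msc hb (x True i (n - 1) (mu - alpha i)))"
        using asm unfolding st by (simp add: sgn_b_def cong: if_cong)
    next
      fix n a b assume ab: "a < dm mu" "b < dm mu"
      show "(if n = 0 then idm (dm mu) else msc hb (xi i (n - 1) mu)) a b =
         (if n = 0 then idm (dm mu) a b else 0) + 1 * ((\<Sum>c<dm (mu - alpha i).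
            (if n = 0 then (\<lambda>a b. 0) else msc hb (x True i (n - 1) (mu - alpha i))) a c * x False i 0 mu c b)
          - (\<Sum>c<dm (mu + alpha i). x False i 0 (mu + alpha i) a c *
            (if n = 0 then (\<lambda>a b. 0) else msc hb (x True i (n - 1) mu)) c b))"
      proof (cases n)
        case 0 then show ?thesis by simp
      next
        case (Suc m)
        then show ?thesis using y6[OF yr ab, of i m 0]
          by (simp add: msc_def right_diff_distrib sum_distrib_left mult.assoc mult.left_commute)
      qed
    qed
    then show ?thesis using True by (simp add: sgn_b_def)
  next
    case False
    have st: "s = False" using False by simp
    have "mpoles (dm mu) (dm mu) F \<subseteq> mpoles (dm (mu - alpha i)) (dm mu) G \<union> mpoles (dm mu) (dm (mu + alpha i)) H"
    proof (rule core[where P = "x True i 0 (mu - alpha i)" and Q = "x True i 0 mu" and \<kappa> = "-1"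
          and E = "idm (dm mu)"])
      show "rat_mat (dm mu) (dm mu) F" using asm by blast
      show "expands_at_infty (dm mu) (dm mu) F
         (\<lambda>n. if n = 0 then idm (dm mu) else msc hb (xi i (n - 1) mu))" using asm by blast
      show "rat_mat (dm (mu - alpha i)) (dm mu) G" using asm unfolding st by (simp add: sgn_b_def cong: if_cong)
      show "expands_at_infty (dm (mu - alpha i)) (dm mu) G
         (\<lambda>n. if n = 0 then (\<lambda>a b. 0) else msc hb (x False i (n - 1) mu))" using asm unfolding st by (simp add: sgn_b_def cong: if_cong)
      show "rat_mat (dm mu) (dm (mu + alpha i)) H" using asm unfolding st by (simp add: sgn_b_def cong: if_cong)
      show "expands_at_infty (dm mu) (dm (mu + alpha i)) H
         (\<lambda>n. if n = 0 then (\<lambda>a b. 0) else msc hb (x False i (n - 1) (mu + alpha i)))"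
        using asm unfolding st by (simp add: sgn_b_def cong: if_cong)
    next
      fix n a b assume ab: "a < dm mu" "b < dm mu"
      show "(if n = 0 then idm (dm mu) else msc hb (xi i (n - 1) mu)) a b =
         (if n = 0 then idm (dm mu) a b else 0) + (-1) * ((\<Sum>c<dm (mu + alpha i).
            (if n = 0 then (\<lambda>a b. 0) else msc hb (x False i (n - 1) (mu + alpha i))) a c * x True i 0 mu c b)
          - (\<Sum>c<dm (mu - alpha i). x True i 0 (mu - alpha i) a c *
            (if n = 0 then (\<lambda>a b. 0) else msc hb (x False i (n - 1) mu)) c b))"
      proof (cases n)
        case 0 then show ?thesis by simp
      next
        case (Suc m)
        then show ?thesis using y6[OF yr ab, of i 0 m]
          by (simp add: msc_def right_diff_distrib sum_distrib_left mult.assoc mult.left_commute sum_negf)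
      qed
    qed
    then show ?thesis using False by (simp add: sgn_b_def)
  qed
next
  fix dm Psi X s i mu F G H
  assume asm: "qloop_rep A d alpha coroot lq dm Psi X \<and> ffd_weights alpha dm \<and> 0 < dm mu \<and>
       rat_mat (dm mu) (dm mu) F \<and>
       expands_at_infty (dm mu) (dm mu) F (\<lambda>n. Psi True i (int n) mu) \<and>
       expands_at_zero (dm mu) (dm mu) F (\<lambda>n. Psi False i (- int n) mu) \<and>
       rat_mat (dm (mu + of_int (sgn_b s) *s alpha i)) (dm mu) G \<and>
       expands_at_infty (dm (mu + of_int (sgn_b s) *s alpha i)) (dm mu) G
         (\<lambda>n. X s i (int n) mu) \<and>
       expands_at_zero (dm (mu + of_int (sgn_b s) *s alpha i)) (dm mu) G
         (\<lambda>n. if n = 0 then (\<lambda>a b. 0) else msc (-1) (X s i (- int n) mu)) \<and>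
       rat_mat (dm mu) (dm (mu - of_int (sgn_b s) *s alpha i)) H \<and>
       expands_at_infty (dm mu) (dm (mu - of_int (sgn_b s) *s alpha i)) H
         (\<lambda>n. X s i (int n) (mu - of_int (sgn_b s) *s alpha i)) \<and>
       expands_at_zero (dm mu) (dm (mu - of_int (sgn_b s) *s alpha i)) H
         (\<lambda>n. if n = 0 then (\<lambda>a b. 0) else msc (-1) (X s i (- int n) (mu - of_int (sgn_b s) *s alpha i)))"
  have qr: "qloop_rep A d alpha coroot lq dm Psi X" using asm by blast
  define c where "c = qpow lq (of_nat (d i)) - inverse (qpow lq (of_nat (d i)))"
  have cnz: "c \<noteq> 0" unfolding c_def using qi_nz assms(2,5) by blast
  have q6': "Psi True i (int n) mu a b = (if n = 0 then Psi False i 0 mu a b else 0) + c *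
     ((\<Sum>c<dm (mu - alpha i). X True i k (mu - alpha i) a c * X False i l mu c b)
     - (\<Sum>c<dm (mu + alpha i). X False i l (mu + alpha i) a c * X True i k mu c b))"
    if "a < dm mu" "b < dm mu" "k + l = int n" for n a b k l
  proof -
    have "Psi False i (int n) mu a b = (if n = 0 then Psi False i 0 mu a b else 0)"
      using qneg[OF qr, of n i mu] by auto
    then show ?thesis using q6[OF qr that(1,2), of i k l] cnz that(3) unfolding c_def[symmetric]
      by (simp add: field_simps)
  qed
  show "mpoles (dm mu) (dm mu) F
           \<subseteq> mpoles (dm (mu + of_int (sgn_b s) *s alpha i)) (dm mu) G
             \<union> mpoles (dm mu) (dm (mu - of_int (sgn_b s) *s alpha i)) H"
  proof (cases s)
    case True
    have st: "s = True" using True by simp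
    have "mpoles (dm mu) (dm mu) F \<subseteq> mpoles (dm (mu + alpha i)) (dm mu) G \<union> mpoles (dm mu) (dm (mu - alpha i)) H"
    proof (rule core[where P = "X False i 0 (mu + alpha i)" and Q = "X False i 0 mu" and \<kappa> = c
          and E = "Psi False i 0 mu"])
      show "rat_mat (dm mu) (dm mu) F" using asm by blast
      show "expands_at_infty (dm mu) (dm mu) F (\<lambda>n. Psi True i (int n) mu)" using asm by blast
      show "rat_mat (dm (mu + alpha i)) (dm mu) G" using asm unfolding st by (simp add: sgn_b_def cong: if_cong)
      show "expands_at_infty (dm (mu + alpha i)) (dm mu) G (\<lambda>n. X True i (int n) mu)"
        using asm unfolding st by (simp add: sgn_b_def cong: if_cong)
      show "rat_mat (dm mu) (dm (mu - alpha i)) H" using asm unfolding st by (simp add: sgn_b_def cong: if_cong)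
      show "expands_at_infty (dm mu) (dm (mu - alpha i)) H (\<lambda>n. X True i (int n) (mu - alpha i))"
        using asm unfolding st by (simp add: sgn_b_def cong: if_cong)
    next
      fix n a b assume ab: "a < dm mu" "b < dm mu"
      show "Psi True i (int n) mu a b = (if n = 0 then Psi False i 0 mu a b else 0) + c *
         ((\<Sum>c<dm (mu - alpha i). X True i (int n) (mu - alpha i) a c * X False i 0 mu c b)
         - (\<Sum>c<dm (mu + alpha i). X False i 0 (mu + alpha i) a c * X True i (int n) mu c b))"
        using q6'[OF ab, of "int n" 0 n] by simp
    qed
    then show ?thesis using True by (simp add: sgn_b_def)
  next
    case False
    have st: "s = False" using False by simp
    have "mpoles (dm mu) (dm mu) F \<subseteq> mpoles (dm (mu - alpha i)) (dm mu) G \<union> mpoles (dm mu) (dm (mu + alpha i)) H"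
    proof (rule core[where P = "X True i 0 (mu - alpha i)" and Q = "X True i 0 mu" and \<kappa> = "-c"
          and E = "Psi False i 0 mu"])
      show "rat_mat (dm mu) (dm mu) F" using asm by blast
      show "expands_at_infty (dm mu) (dm mu) F (\<lambda>n. Psi True i (int n) mu)" using asm by blast
      show "rat_mat (dm (mu - alpha i)) (dm mu) G" using asm unfolding st by (simp add: sgn_b_def cong: if_cong)
      show "expands_at_infty (dm (mu - alpha i)) (dm mu) G (\<lambda>n. X False i (int n) mu)"
        using asm unfolding st by (simp add: sgn_b_def cong: if_cong)
      show "rat_mat (dm mu) (dm (mu + alpha i)) H" using asm unfolding st by (simp add: sgn_b_def cong: if_cong)
      show "expands_at_infty (dm mu) (dm (mu + alpha i)) H (\<lambda>n. X False i (int n) (mu + alpha i))"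
        using asm unfolding st by (simp add: sgn_b_def cong: if_cong)
    next
      fix n a b assume ab: "a < dm mu" "b < dm mu"
      show "Psi True i (int n) mu a b = (if n = 0 then Psi False i 0 mu a b else 0) + (- c) *
         ((\<Sum>c<dm (mu + alpha i). X False i (int n) (mu + alpha i) a c * X True i 0 mu c b)
         - (\<Sum>c<dm (mu - alpha i). X True i 0 (mu - alpha i) a c * X False i (int n) mu c b))"
        using q6'[OF ab, of 0 "int n" n] by (simp add: algebra_simps)
    qed
    then show ?thesis using False by (simp add: sgn_b_def)
  qed
qed

end
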